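(* Let $n\geq 2$ be an integer and let $\psi,\phi$ be homogeneous and bi-Lipschitz (as defined in the context). Then the map $H:\mathbb{R}^{2\times n}\to\mathbb{R}^m$ defined in the context is bi-Lipschitz with respect to $d_{\mathcal{G}_{+}}$: there exist constants $0<a\leq b$ such that for all ${X},{Y}\in\mathbb{R}^{2\times n}$, $$a\, d_{\mathcal{G}_{+}}({X},{Y})\leq\|H({X})-H({Y})\|_\infty\leq b\, d_{\mathcal{G}_{+}}({X},{Y}).$$
   Context: For ${X}\in\mathbb{R}^{2\times n}$ with columns $x_1,\dots,x_n$, let $\bar{X}$ be its centralization, i.e. the point set with columns $x_j-\frac1n\sum_k x_k$. For $x=[a,b]\in\mathbb{R}^2$ write $x^\perp=[-b,a]$. If $\bar{X}=0$ set $H({X})=0_m$. Otherwise, writing $x_1,\dots,x_n$ for the columns of $\bar X$, define $$h_i=\psi\Big(\|x_i\|_2,\ \{\!\{\big(\tfrac{x_i\cdot x_j}{\|\bar X\|_F},\tfrac{x_i^\perp\cdot x_j}{\|\bar X\|_F},\|x_j\|_2\big)\mid j\in[n]\setminus\{i\}\}\!\}\Big),\qquad H({X})=\phi(\{\!\{h_i\mid i\in[n]\}\!\}).$$ For multisets $S=\{\!\{s_1,\dots,s_N\}\!\}$, $S'=\{\!\{s'_1,\dots,s'_N\}\!\}$ of vectors in a Euclidean space, $\mathcal{W}_\infty(S,S')=\min_{\tau\in S_N}\max_{i}\|s_i-s'_{\tau(i)}\|_\infty$. The function $\phi$ (on multisets of $n$ vectors) is bi-Lipschitz if there are $0<c_\phi\le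 C_\phi$ with $c_\phi\mathcal{W}_\infty(S,S')\le\|\phi(S)-\phi(S')\|_\infty\le C_\phi\mathcal{W}_\infty(S,S')$; the function $\psi$ (on pairs of a vector and a multiset of $n-1$ vectors) is bi-Lipschitz if there are $0<c_\psi\le C_\psi$ with $c_\psi\max\{\|v-v'\|_\infty,\mathcal{W}_\infty(S,S')\}\le\|\psi(v,S)-\psi(v',S')\|_\infty\le C_\psi\max\{\|v-v'\|_\infty,\mathcal{W}_\infty(S,S')\}$. Homogeneity means $\phi(tS)=t\phi(S)$ and $\psi(tv,tS)=t\psi(v,S)$ for all $t>0$ (where $tS$ scales every element). The group $\mathcal{G}_{+}$ acts on $\mathbb{R}^{2\times n}$ by column permutations, a common proper rotation $R\in SO(2)$, and a common translation; $d_{\mathcal{G}_{+}}({X},{Y})=\min_{(\pi,R,t)\in S_n\times SO(2)\times\mathbb{R}^2}\big[\sum_j\|x_j-Ry_{\pi(j)}+t\|_2^2\big]^{1/2}$. *)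

theory Defs
  imports "HOL-Analysis.Analysis" "HOL-Library.Multiset"
begin

text \<open>A point set X in R^(2 x n) is a matrix  X :: real^2^'n  whose columns X$j :: real^2
  are indexed by the finite type 'n (so n = CARD('n)).  The sup-norm on R^k is  infnorm.\<close>

definition perp2 :: "real^2 \<Rightarrow> real^2" where
  "perp2 x = vector [- (x$2), x$1]"

definition centralize :: "real^2^'n \<Rightarrow> real^2^'n" where
  "centralize X = (\<chi> j. X$j - (1 / real CARD('n)) *\<^sub>R (\<Sum>k\<in>UNIV. X$k))"

text \<open>W_infinity distance between two multisets of the same size: minimum over all
  matchings (enumerations as lists) of the largest sup-norm difference.\<close>
definition Winf :: "'a::euclidean_space multiset \<Rightarrow> 'a multiset \<Rightarrow> real" where
  "Winf S T = (INF p \<in> {(xs, ys). mset xs = S \<and> mset ys = T}.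
      Max (insert 0 ((\<lambda>i. infnorm (fst p ! i - snd p ! i)) ` {..<length (fst p)})))"

definition homog_phi :: "nat \<Rightarrow> ('a::real_vector multiset \<Rightarrow> 'b::real_vector) \<Rightarrow> bool" where
  "homog_phi N phi \<longleftrightarrow> (\<forall>S t. size S = N \<and> t > 0 \<longrightarrow>
      phi (image_mset (scaleR t) S) = t *\<^sub>R phi S)"

definition homog_psi :: "nat \<Rightarrow> ('v::real_vector \<Rightarrow> 'a::real_vector multiset \<Rightarrow> 'b::real_vector) \<Rightarrow> bool" where
  "homog_psi N psi \<longleftrightarrow> (\<forall>v S t. size S = N \<and> t > 0 \<longrightarrow>
      psi (t *\<^sub>R v) (image_mset (scaleR t) S) = t *\<^sub>R psi v S)"

definition bilip_phi :: "nat \<Rightarrow> ('a::euclidean_space multiset \<Rightarrow> 'b::euclidean_space) \<Rightarrow> bool" where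
  "bilip_phi N phi \<longleftrightarrow> (\<exists>c C. 0 < c \<and> c \<le> C \<and> (\<forall>S S'. size S = N \<and> size S' = N \<longrightarrow>
      c * Winf S S' \<le> infnorm (phi S - phi S') \<and> infnorm (phi S - phi S') \<le> C * Winf S S'))"

definition bilip_psi :: "nat \<Rightarrow> ('v::euclidean_space \<Rightarrow> 'a::euclidean_space multiset \<Rightarrow> 'b::euclidean_space) \<Rightarrow> bool" where
  "bilip_psi N psi \<longleftrightarrow> (\<exists>c C. 0 < c \<and> c \<le> C \<and> (\<forall>v v' S S'. size S = N \<and> size S' = N \<longrightarrow>
      c * max (infnorm (v - v')) (Winf S S') \<le> infnorm (psi v S - psi v' S') \<and>
      infnorm (psi v S - psi v' S') \<le> C * max (infnorm (v - v')) (Winf S S')))"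

text \<open>The invariant H.  The Frobenius norm of a matrix real^2^'n is its norm.\<close>
definition Hmap :: "(real \<Rightarrow> (real^3) multiset \<Rightarrow> 'd::euclidean_space) \<Rightarrow> ('d multiset \<Rightarrow> 'e::zero)
    \<Rightarrow> real^2^'n \<Rightarrow> 'e" where
  "Hmap psi phi X = (let Xc = centralize X in
     if Xc = 0 then 0 else
     phi (image_mset (\<lambda>i. psi (norm (Xc$i))
            (image_mset (\<lambda>j. vector [(Xc$i \<bullet> Xc$j) / norm Xc, (perp2 (Xc$i) \<bullet> Xc$j) / norm Xc, norm (Xc$j)])
               (mset_set (UNIV - {i}))))
          (mset_set UNIV)))"

definition SO2 :: "(real^2^2) set" where
  "SO2 = {R. orthogonal_matrix R \<and> det R = 1}"

definition dGplus :: "real^2^'n \<Rightarrow> real^2^'n \<Rightarrow> real" where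
  "dGplus X Y = (INF p \<in> {(\<pi>, R, t). \<pi> permutes (UNIV :: 'n set) \<and> R \<in> SO2}.
      (case p of (\<pi>, R, t) \<Rightarrow> sqrt (\<Sum>j\<in>UNIV. (norm (X$j - R *v Y$(\<pi> j) + t))\<^sup>2)))"

end

theory Submission
  imports Defs
begin


lemma perp2_1[simp]: "perp2 x $ 1 = - (x$2)" and perp2_2[simp]: "perp2 x $ 2 = x$1"
  by (simp_all add: perp2_def)

lemma inner2: "(x::real^2) \<bullet> y = x$1 * y$1 + x$2 * y$2"
  by (simp add: inner_vec_def sum_2)

lemma norm2_sq: "(norm (x::real^2))\<^sup>2 = (x$1)\<^sup>2 + (x$2)\<^sup>2"
proof -
  have "(norm x)\<^sup>2 = x \<bullet> x" by (simp add: power2_norm_eq_inner)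
  thus ?thesis by (simp add: inner2 power2_eq_square)
qed

lemma norm_perp2[simp]: "norm (perp2 x) = norm x"
proof -
  have "(norm (perp2 x))\<^sup>2 = (norm x)\<^sup>2" by (simp add: norm2_sq)
  thus ?thesis by (simp add: power2_eq_iff_nonneg)
qed

lemma mv2: "((R::real^2^2) *v v) $ 1 = R$1$1 * v$1 + R$1$2 * v$2"
   "((R::real^2^2) *v v) $ 2 = R$2$1 * v$1 + R$2$2 * v$2"
  by (simp_all add: matrix_vector_mult_def sum_2)

lemma vec2_eq: "(x::real^2) = y \<longleftrightarrow> x$1 = y$1 \<and> x$2 = y$2"
  by (simp add: vec_eq_iff forall_2)

lemma SO2_entries:
  assumes "R \<in> SO2"
  shows "R$2$2 = R$1$1" "R$1$2 = - R$2$1" "(R$1$1)\<^sup>2 + (R$2$1)\<^sup>2 = 1"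
proof -
  have o: "transpose R ** R = mat 1" and d: "det R = 1"
    using assms by (auto simp: SO2_def orthogonal_matrix)
  have e: "(transpose R ** R) $ i $ j = (mat 1 :: real^2^2) $ i $ j" for i j using o by simp
  have e11: "R$1$1 * R$1$1 + R$2$1 * R$2$1 = 1" using e[of 1 1]
    by (simp add: matrix_matrix_mult_def sum_2 transpose_def mat_def)
  have e22: "R$1$2 * R$1$2 + R$2$2 * R$2$2 = 1" using e[of 2 2]
    by (simp add: matrix_matrix_mult_def sum_2 transpose_def mat_def)
  have dd: "R$1$1 * R$2$2 - R$1$2 * R$2$1 = 1" using d by (simp add: det_2)
  have "(R$2$2 - R$1$1)\<^sup>2 + (R$1$2 + R$2$1)\<^sup>2 = 0"
    using e11 e22 dd by (simp add: power2_eq_square algebra_simps)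
  hence "(R$2$2 - R$1$1)\<^sup>2 = 0" "(R$1$2 + R$2$1)\<^sup>2 = 0"
    by (smt (verit) zero_le_power2)+
  thus "R$2$2 = R$1$1" "R$1$2 = - R$2$1" by auto
  show "(R$1$1)\<^sup>2 + (R$2$1)\<^sup>2 = 1" using e11 by (simp add: power2_eq_square)
qed

lemma SO2_perp: "R \<in> SO2 \<Longrightarrow> perp2 (R *v v) = R *v perp2 v"
  using SO2_entries[of R] by (simp add: vec2_eq mv2 algebra_simps)

lemma SO2_inner: "R \<in> SO2 \<Longrightarrow> (R *v u) \<bullet> (R *v v) = u \<bullet> v"
proof -
  assume "R \<in> SO2"
  from SO2_entries[OF this] have a: "R$2$2 = R$1$1" "R$1$2 = - R$2$1" "(R$1$1)\<^sup>2 + (R$2$1)\<^sup>2 = 1" by auto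
  have "(R *v u) \<bullet> (R *v v) = ((R$1$1)\<^sup>2 + (R$2$1)\<^sup>2) * (u \<bullet> v)"
    by (simp add: inner2 mv2 a(1,2) power2_eq_square algebra_simps)
  thus ?thesis using a(3) by simp
qed

lemma SO2_norm: "R \<in> SO2 \<Longrightarrow> norm (R *v u) = norm u"
  using SO2_inner[of R u u] by (simp add: norm_eq_sqrt_inner)

lemma id_SO2: "mat 1 \<in> SO2"
  by (simp add: SO2_def orthogonal_matrix_id)

lemma perp_inner_norm: "(norm (x::real^2))\<^sup>2 * (norm z)\<^sup>2 = (z \<bullet> x)\<^sup>2 + (z \<bullet> perp2 x)\<^sup>2"
  unfolding norm2_sq inner2 perp2_1 perp2_2 by algebra

lemma rot_exists:
  assumes "x \<noteq> 0" "y \<noteq> (0::real^2)"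
  shows "\<exists>R\<in>SO2. \<forall>w. (R *v w) \<bullet> x = (norm x / norm y) * (w \<bullet> y) \<and>
       (R *v w) \<bullet> perp2 x = (norm x / norm y) * (w \<bullet> perp2 y)"
proof -
  define nx ny where "nx = norm x" "ny = norm y"
  have nx: "nx > 0" "nx\<^sup>2 = (x$1)\<^sup>2 + (x$2)\<^sup>2" using assms norm2_sq[of x] by (auto simp: nx_ny_def)
  have ny: "ny > 0" "ny\<^sup>2 = (y$1)\<^sup>2 + (y$2)\<^sup>2" using assms norm2_sq[of y] by (auto simp: nx_ny_def)
  define c where "c = (x$1*y$1 + x$2*y$2) / (nx*ny)"
  define s where "s = (x$2*y$1 - x$1*y$2) / (nx*ny)"
  define R :: "real^2^2" where "R = vector [vector [c, -s], vector [s, c]]"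
  have R: "R$1$1 = c" "R$1$2 = -s" "R$2$1 = s" "R$2$2 = c" by (simp_all add: R_def)
  have cN: "c*(nx*ny) = x$1*y$1 + x$2*y$2" and sN: "s*(nx*ny) = x$2*y$1 - x$1*y$2"
    using nx ny by (simp_all add: c_def s_def)
  have cs: "c\<^sup>2 + s\<^sup>2 = 1"
  proof -
    have "(c\<^sup>2 + s\<^sup>2) * (nx*ny)\<^sup>2 = (nx*ny)\<^sup>2"
      using cN sN nx(2) ny(2) by algebra
    thus ?thesis using nx ny by simp
  qed
  have "R \<in> SO2"
    unfolding SO2_def orthogonal_matrix_def
    using cs by (simp add: vec_eq_iff forall_2 matrix_matrix_mult_def sum_2 transpose_def mat_def R det_2 power2_eq_square)
  moreover have "(R *v w) \<bullet> x = (nx / ny) * (w \<bullet> y) \<and>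
       (R *v w) \<bullet> perp2 x = (nx / ny) * (w \<bullet> perp2 y)" for w
  proof -
    have k1: "((R *v w) \<bullet> x) * (nx*ny) = nx\<^sup>2 * (w \<bullet> y)"
      unfolding inner2 mv2 R using cN sN nx(2) by algebra
    have k2: "((R *v w) \<bullet> perp2 x) * (nx*ny) = nx\<^sup>2 * (w \<bullet> perp2 y)"
      unfolding inner2 mv2 R perp2_1 perp2_2 using cN sN nx(2) by algebra
    have "nx\<^sup>2 * t / (nx*ny) = (nx/ny) * t" for t using nx(1) ny(1) by (simp add: power2_eq_square)
    thus ?thesis using k1 k2 nx ny
      by (metis (no_types, lifting) mult_eq_0_iff nonzero_mult_div_cancel_right order_less_irrefl)
  qed
  ultimately show ?thesis unfolding nx_ny_def by blast
qed



lemma coord_bound: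
  fixes A B N M nx ny s d :: real
  assumes N: "N > 0" and M: "M > 0" and nx: "nx > 0" and ny: "ny > 0"
    and h1: "\<bar>A/N - B/M\<bar> \<le> d" and h2: "N \<le> s*nx" and h3: "\<bar>B\<bar> \<le> ny*M"
    and h4: "\<bar>nx - ny\<bar> \<le> d" and h5: "\<bar>N - M\<bar> \<le> s*d" and s: "s \<ge> 0"
  shows "\<bar>A/nx - B/ny\<bar> \<le> 3 * s * d"
proof -
  have d0: "d \<ge> 0" using h1 by linarith
  have r: "N/nx \<le> s" using h2 nx by (simp add: divide_le_eq mult.commute)
  have r0: "N/nx \<ge> 0" using N nx by simp
  have eq: "A/nx - B/ny = (A/N - B/M)*(N/nx) + (B/(M*nx*ny)) * (N*ny - M*nx)"
    using N M nx ny by (simp add: field_simps)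
  have t1: "\<bar>(A/N - B/M)*(N/nx)\<bar> \<le> d * s"
  proof -
    have "\<bar>N/nx\<bar> \<le> s" using r r0 by simp
    thus ?thesis by (simp only: abs_mult) (rule mult_mono[OF h1 _ d0 abs_ge_zero])
  qed
  have "\<bar>B/(M*nx*ny)\<bar> = \<bar>B\<bar>/(M*nx*ny)" using M nx ny by simp
  also have "\<dots> \<le> (ny*M)/(M*nx*ny)" using h3 M nx ny by (intro divide_right_mono) auto
  also have "\<dots> = 1/nx" using M ny by simp
  finally have u: "\<bar>B/(M*nx*ny)\<bar> \<le> 1/nx" .
  have t2a: "\<bar>(B/(M*nx*ny)) * (N*ny - M*nx)\<bar> \<le> (1/nx) * \<bar>N*ny - M*nx\<bar>"
    unfolding abs_mult using mult_right_mono[OF u abs_ge_zero] .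
  have "\<bar>N*ny - M*nx\<bar> = \<bar>N*(ny - nx) + nx*(N - M)\<bar>" by (simp add: algebra_simps)
  also have "\<dots> \<le> N*\<bar>ny - nx\<bar> + nx*\<bar>N - M\<bar>"
    using N nx by (simp add: abs_mult abs_triangle_ineq[THEN order_trans])
  also have "\<dots> \<le> N*d + nx*(s * d)"
    using h4 h5 N nx by (intro add_mono mult_left_mono) (auto simp: abs_minus_commute)
  finally have w: "\<bar>N*ny - M*nx\<bar> \<le> N*d + nx*(s * d)" .
  have "(1/nx) * \<bar>N*ny - M*nx\<bar> \<le> (1/nx) * (N*d + nx*(s * d))"
    using w nx by (simp add: divide_right_mono)
  also have "\<dots> = (N/nx) * d + s * d" using nx by (simp add: field_simps)
  also have "\<dots> \<le> s * d + s * d" using mult_right_mono[OF r d0] by linarith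
  finally have t2: "\<bar>(B/(M*nx*ny)) * (N*ny - M*nx)\<bar> \<le> 2 * s * d" using t2a by linarith
  show ?thesis unfolding eq using t1 t2 abs_triangle_ineq[of "(A/N - B/M)*(N/nx)" "(B/(M*nx*ny)) * (N*ny - M*nx)"]
    by (simp add: algebra_simps)
qed

lemma lip3:
  fixes a b a' b' :: "real^2" and N M d :: real
  assumes "norm a \<le> N" "norm b \<le> N" "norm a' \<le> M" "norm b' \<le> M"
    "norm (a - a') \<le> d" "norm (b - b') \<le> d" "\<bar>N - M\<bar> \<le> d" "N \<ge> 0" "M \<ge> 0"
  shows "\<bar>(a \<bullet> b)/N - (a' \<bullet> b')/M\<bar> \<le> 3*d"
proof -
  have gen: "\<bar>(a \<bullet> b)/N - (a' \<bullet> b')/M\<bar> \<le> 3*d"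
    if h: "norm a \<le> N" "norm b \<le> N" "norm a' \<le> M" "norm b' \<le> M"
    "norm (a - a') \<le> d" "norm (b - b') \<le> d" "\<bar>N - M\<bar> \<le> d" "N \<ge> 0" "M \<ge> 0" and NM: "M \<le> N"
    for a b a' b' :: "real^2" and N M d :: real
  proof (cases "M = 0")
    case True
    hence "a' = 0" "b' = 0" using h by auto
    have "\<bar>(a \<bullet> b)/N\<bar> \<le> d"
    proof (cases "N = 0")
      case False
      have "\<bar>a \<bullet> b\<bar> \<le> N * N" using Cauchy_Schwarz_ineq2[of a b] h
        by (meson mult_mono' norm_ge_zero order_trans)
      hence "\<bar>(a \<bullet> b)/N\<bar> \<le> N" using False h(8) by (simp add: divide_le_eq)
      thus ?thesis using h(7) True by linarith
    qed (use h in auto)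
    moreover have "d \<ge> 0" using h(5) norm_ge_zero order_trans by blast
    ultimately show ?thesis using \<open>a' = 0\<close> by simp
  next
    case False
    hence M0: "M > 0" "N > 0" using h NM by auto
    have eq: "(a \<bullet> b)/N - (a' \<bullet> b')/M = ((a - a') \<bullet> b + a' \<bullet> (b - b'))/N + (a' \<bullet> b') * ((M - N)/(N*M))"
      using M0 by (simp add: field_simps inner_diff_left inner_diff_right)
    have "\<bar>(a - a') \<bullet> b\<bar> \<le> d * N"
      using Cauchy_Schwarz_ineq2[of "a - a'" b] h by (meson mult_mono' norm_ge_zero order_trans)
    moreover have "\<bar>a' \<bullet> (b - b')\<bar> \<le> N * d"
      using Cauchy_Schwarz_ineq2[of a' "b - b'"] h NM by (meson mult_mono' norm_ge_zero order_trans)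
    ultimately have "\<bar>(a - a') \<bullet> b + a' \<bullet> (b - b')\<bar> \<le> 2 * d * N"
      using abs_triangle_ineq[of "(a - a') \<bullet> b" "a' \<bullet> (b - b')"] by (simp add: mult.commute[of N d])
    hence e1: "\<bar>((a - a') \<bullet> b + a' \<bullet> (b - b'))/N\<bar> \<le> 2*d" using M0 by (simp add: divide_le_eq)
    have c2: "\<bar>a' \<bullet> b'\<bar> \<le> M * M"
      using Cauchy_Schwarz_ineq2[of a' b'] h by (meson mult_mono' norm_ge_zero order_trans)
    have "\<bar>(a' \<bullet> b') * ((M - N)/(N*M))\<bar> = \<bar>a' \<bullet> b'\<bar> * (\<bar>N - M\<bar>/(N*M))"
      using M0 by (simp add: abs_mult abs_minus_commute)
    also have "\<dots> \<le> (M*M) * (d/(N*M))"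
      using c2 h(7) M0 by (intro mult_mono divide_right_mono) auto
    also have "\<dots> = d * (M/N)" using M0 by (simp add: field_simps)
    also have "\<dots> \<le> d" using M0 NM h(5) by (smt (verit) divide_le_eq_1 mult_left_le norm_ge_zero)
    finally have e2: "\<bar>(a' \<bullet> b') * ((M - N)/(N*M))\<bar> \<le> d" .
    have tri: "\<bar>pp + qq\<bar> \<le> 3 * d" if "\<bar>pp\<bar> \<le> 2 * d" "\<bar>qq\<bar> \<le> d" for pp qq :: real
      using that by linarith
    show ?thesis unfolding eq by (rule tri[OF e1 e2])
  qed
  show ?thesis
  proof (cases "M \<le> N")
    case True then show ?thesis using gen assms by blast
  next
    case False
    have "\<bar>(a' \<bullet> b')/M - (a \<bullet> b)/N\<bar> \<le> 3*d"
      using gen[where a=a' and b=b' and a'=a and b'=b and N=M and M=N and d=d] assms False by (simp add: norm_minus_commute abs_minus_commute)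
    thus ?thesis by (simp add: abs_minus_commute)
  qed
qed

lemma perp2_diff: "perp2 (a - b) = perp2 a - perp2 b"
  by (simp add: vec2_eq)

lemma z_identity:
  fixes x y u w :: "real^2" and R
  assumes "x \<noteq> 0" "y \<noteq> 0"
    and R: "\<forall>w. (R *v w) \<bullet> x = (norm x / norm y) * (w \<bullet> y) \<and>
       (R *v w) \<bullet> perp2 x = (norm x / norm y) * (w \<bullet> perp2 y)"
  shows "(norm (u - R *v w))\<^sup>2 = ((u \<bullet> x)/norm x - (w \<bullet> y)/norm y)\<^sup>2 + ((u \<bullet> perp2 x)/norm x - (w \<bullet> perp2 y)/norm y)\<^sup>2"
proof -
  have nx: "norm x > 0" "norm y > 0" using assms by auto
  have "(norm x)\<^sup>2 * (norm (u - R *v w))\<^sup>2 = ((u - R *v w) \<bullet> x)\<^sup>2 + ((u - R *v w) \<bullet> perp2 x)\<^sup>2"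
    by (rule perp_inner_norm)
  also have "(u - R *v w) \<bullet> x = norm x * ((u \<bullet> x)/norm x - (w \<bullet> y)/norm y)"
    using R nx by (simp add: inner_diff_left field_simps)
  also have "(u - R *v w) \<bullet> perp2 x = norm x * ((u \<bullet> perp2 x)/norm x - (w \<bullet> perp2 y)/norm y)"
    using R nx by (simp add: inner_diff_left field_simps)
  finally have "(norm x)\<^sup>2 * (norm (u - R *v w))\<^sup>2 = (norm x * ((u \<bullet> x)/norm x - (w \<bullet> y)/norm y))\<^sup>2 + (norm x * ((u \<bullet> perp2 x)/norm x - (w \<bullet> perp2 y)/norm y))\<^sup>2" .
  also have "\<dots> = (norm x)\<^sup>2 * (((u \<bullet> x)/norm x - (w \<bullet> y)/norm y)\<^sup>2 + ((u \<bullet> perp2 x)/norm x - (w \<bullet> perp2 y)/norm y)\<^sup>2)"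
    by (simp only: power_mult_distrib distrib_left)
  finally show ?thesis using nx by simp
qed



lemma Winf_le:
  assumes "mset xs = S" "mset ys = T" "B \<ge> 0"
    "\<And>k. k < length xs \<Longrightarrow> infnorm (xs!k - ys!k) \<le> B"
  shows "Winf S T \<le> B"
  unfolding Winf_def
proof (rule cINF_lower2)
  show "(xs, ys) \<in> {(xs, ys). mset xs = S \<and> mset ys = T}" using assms by simp
  show "bdd_below ((\<lambda>p. Max (insert 0 ((\<lambda>i. infnorm (fst p ! i - snd p ! i)) ` {..<length (fst p)}))) `
      {(xs, ys). mset xs = S \<and> mset ys = T})"
    by (rule bdd_belowI[of _ 0]) auto
  show "Max (insert 0 ((\<lambda>i. infnorm (fst (xs, ys) ! i - snd (xs, ys) ! i)) ` {..<length (fst (xs, ys))})) \<le> B"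
    using assms by auto
qed

lemma finite_msets_lists: "finite {xs. mset xs = S}"
proof -
  have "{xs. mset xs = S} \<subseteq> {xs. set xs \<subseteq> set_mset S \<and> length xs = size S}" by auto
  moreover have "finite {xs. set xs \<subseteq> set_mset S \<and> length xs = size S}"
    by (rule finite_lists_length_eq) simp
  ultimately show ?thesis by (rule finite_subset)
qed

lemma Winf_attained:
  fixes S T :: "'a::euclidean_space multiset"
  shows "\<exists>xs ys. mset xs = S \<and> mset ys = T \<and> (\<forall>k<length xs. infnorm (xs!k - ys!k) \<le> Winf S T)"
proof -
  define P where "P = {(xs, ys). mset xs = S \<and> mset ys = T}"
  define F :: "'a list \<times> 'a list \<Rightarrow> real" where "F = (\<lambda>p. Max (insert 0 ((\<lambda>i. infnorm (fst p ! i - snd p ! i)) ` {..<length (fst p)})))"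
  have fin: "finite P"
  proof -
    have "P = {xs. mset xs = S} \<times> {ys. mset ys = T}" by (auto simp: P_def)
    thus ?thesis using finite_msets_lists[of S] finite_msets_lists[of T] by (simp add: finite_cartesian_product)
  qed
  have ne: "P \<noteq> {}" using ex_mset[of S] ex_mset[of T] by (auto simp: P_def)
  have "Winf S T = Inf (F ` P)" by (simp add: Winf_def P_def F_def)
  also have "\<dots> = Min (F ` P)" using fin ne by (simp add: cInf_eq_Min)
  finally have "Winf S T \<in> F ` P" using fin ne by simp
  then obtain xs ys where p: "(xs, ys) \<in> P" "Winf S T = F (xs, ys)" by auto
  have "infnorm (xs!k - ys!k) \<le> Winf S T" if "k < length xs" for k
    unfolding p(2) F_def using that by (auto intro: Max_ge)
  thus ?thesis using p(1) unfolding P_def by blast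
qed

lemma bij_extend:
  assumes "bij_betw t (A - {a}) (B - {b})" "a \<in> A" "b \<in> B"
  shows "bij_betw (t(a:=b)) A B"
proof -
  have 1: "bij_betw (t(a:=b)) (A - {a}) (B - {b})"
    using assms(1) by (rule bij_betw_cong[THEN iffD1, rotated]) auto
  have 2: "bij_betw (t(a:=b)) {a} {b}" by (simp add: bij_betw_def)
  have "bij_betw (t(a:=b)) ((A - {a}) \<union> {a}) ((B - {b}) \<union> {b})"
    by (rule bij_betw_combine[OF 1 2]) auto
  moreover have "(A - {a}) \<union> {a} = A" "(B - {b}) \<union> {b} = B" using assms by auto
  ultimately show ?thesis by simp
qed

lemma match_bij:
  assumes "finite A" "finite B" "mset xs = image_mset f (mset_set A)" "mset ys = image_mset g (mset_set B)"
    "length xs = length ys" "\<forall>k<length xs. P (xs!k) (ys!k)"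
  shows "\<exists>\<sigma>. bij_betw \<sigma> A B \<and> (\<forall>i\<in>A. P (f i) (g (\<sigma> i)))"
  using assms
proof (induction xs arbitrary: ys A B)
  case Nil
  hence "A = {}" "B = {}" using Nil by (auto simp: mset_set_empty_iff)
  thus ?case by (auto intro!: exI[of _ id] simp: bij_betw_def)
next
  case (Cons x xs)
  obtain y ys' where ys: "ys = y # ys'" using Cons.prems(5) by (cases ys) auto
  have "x \<in># image_mset f (mset_set A)" using Cons.prems(3) by (metis list.set_intros(1) set_mset_mset)
  then obtain a where a: "a \<in> A" "x = f a" using Cons.prems(1) by auto
  have "y \<in># image_mset g (mset_set B)" using Cons.prems(4) ys by (metis list.set_intros(1) set_mset_mset)
  then obtain b where b: "b \<in> B" "y = g b" using Cons.prems(2) by auto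
  have mA: "mset_set A = add_mset a (mset_set (A - {a}))" using a Cons.prems(1) by (simp add: mset_set.remove)
  have mB: "mset_set B = add_mset b (mset_set (B - {b}))" using b Cons.prems(2) by (simp add: mset_set.remove)
  have 1: "mset xs = image_mset f (mset_set (A - {a}))" using Cons.prems(3) a mA by simp
  have 2: "mset ys' = image_mset g (mset_set (B - {b}))" using Cons.prems(4) ys b mB by simp
  have 3: "\<forall>k<length xs. P (xs!k) (ys'!k)"
  proof (intro allI impI)
    fix k assume "k < length xs"
    thus "P (xs!k) (ys'!k)" using Cons.prems(6)[rule_format, of "Suc k"] ys by simp
  qed
  obtain t where t: "bij_betw t (A - {a}) (B - {b})" "\<forall>i\<in>A - {a}. P (f i) (g (t i))"
    using Cons.IH[OF _ _ 1 2 _ 3] Cons.prems(1,2,5) ys by auto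
  have "P (f a) (g b)" using Cons.prems(6)[rule_format, of 0] ys a b by simp
  moreover have "\<forall>i\<in>A. P (f i) (g ((t(a:=b)) i))" using t(2) calculation by auto
  ultimately show ?case using bij_extend[OF t(1) a(1) b(1)] by blast
qed

lemma mset_map_distinct: "distinct L \<Longrightarrow> set L = A \<Longrightarrow> mset (map f L) = image_mset f (mset_set A)"
  by (metis mset_map mset_set_set)

lemma mset_list_of:
  assumes "finite A"
  obtains L where "distinct L" "set L = A" "\<And>f. mset (map f L) = image_mset f (mset_set A)"
proof -
  obtain L where "distinct L" "set L = A" using finite_distinct_list[OF assms] by blast
  moreover have "mset (map f L) = image_mset f (mset_set A)" for f
    using calculation by (metis mset_map mset_set_set)
  ultimately show ?thesis using that by blast
qed



definition trip :: "real^2^'n \<Rightarrow> 'n \<Rightarrow> 'n \<Rightarrow> real^3" where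
  "trip x i j = vector [(x$i \<bullet> x$j) / norm x, (perp2 (x$i) \<bullet> x$j) / norm x, norm (x$j)]"

definition hh :: "(real \<Rightarrow> (real^3) multiset \<Rightarrow> 'd) \<Rightarrow> real^2^'n \<Rightarrow> 'n \<Rightarrow> 'd" where
  "hh psi x i = psi (norm (x$i)) (image_mset (trip x i) (mset_set (UNIV - {i})))"

definition SS :: "(real \<Rightarrow> (real^3) multiset \<Rightarrow> 'd) \<Rightarrow> real^2^'n \<Rightarrow> 'd multiset" where
  "SS psi x = image_mset (hh psi x) (mset_set UNIV)"

lemma normsq_mat: "(norm (x::real^2^'n))\<^sup>2 = (\<Sum>j\<in>UNIV. (norm (x$j))\<^sup>2)"
  by (simp add: norm_vec_def L2_set_def sum_nonneg)

lemma homog_psi_zero: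
  fixes psi :: "'v::real_vector \<Rightarrow> 'a::real_vector multiset \<Rightarrow> 'b::real_vector"
  assumes "homog_psi N psi" "size M = N"
  shows "psi 0 (image_mset (\<lambda>_. 0) M) = 0"
proof -
  have "image_mset (scaleR 2) (image_mset (\<lambda>_. 0::'a::real_vector) M) = image_mset (\<lambda>_. 0) M"
    by (simp add: multiset.map_comp o_def)
  moreover have "psi (2 *\<^sub>R 0) (image_mset (scaleR 2) (image_mset (\<lambda>_. 0::'a) M)) = 2 *\<^sub>R psi 0 (image_mset (\<lambda>_. 0) M)"
    using assms(1)[unfolded homog_psi_def, rule_format, of "image_mset (\<lambda>_. 0::'a) M" 2 0] assms(2) by simp
  ultimately have "psi 0 (image_mset (\<lambda>_. 0::'a) M) = 2 *\<^sub>R psi 0 (image_mset (\<lambda>_. 0) M)" by simp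
  thus ?thesis by (simp add: scaleR_2)
qed

lemma homog_phi_zero:
  fixes phi :: "'a::real_vector multiset \<Rightarrow> 'b::real_vector"
  assumes "homog_phi N phi" "size M = N"
  shows "phi (image_mset (\<lambda>_. 0) M) = 0"
proof -
  have "image_mset (scaleR 2) (image_mset (\<lambda>_. 0::'a::real_vector) M) = image_mset (\<lambda>_. 0) M"
    by (simp add: multiset.map_comp o_def)
  moreover have "phi (image_mset (scaleR 2) (image_mset (\<lambda>_. 0::'a) M)) = 2 *\<^sub>R phi (image_mset (\<lambda>_. 0) M)"
    using assms unfolding homog_phi_def by auto
  ultimately have "phi (image_mset (\<lambda>_. 0::'a) M) = 2 *\<^sub>R phi (image_mset (\<lambda>_. 0) M)" by simp
  thus ?thesis by (simp add: scaleR_2)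
qed

lemma vector3_0: "vector [0, 0, 0] = (0::real^3)"
  by (simp add: vec_eq_iff forall_3)

lemma trip_zero: "trip 0 i = (\<lambda>_. 0)"
  by (simp add: fun_eq_iff trip_def vector3_0)

lemma Hmap_eq:
  fixes psi :: "real \<Rightarrow> (real^3) multiset \<Rightarrow> 'd::euclidean_space" and phi :: "'d multiset \<Rightarrow> 'e::real_vector"
  assumes "homog_psi (CARD('n::finite) - 1) psi" "homog_phi (CARD('n)) phi"
  shows "Hmap psi phi (X::real^2^'n) = phi (SS psi (centralize X))"
proof (cases "centralize X = 0")
  case True
  have "hh psi (0::real^2^'n) i = 0" for i
  proof -
    have "hh psi (0::real^2^'n) i = psi 0 (image_mset (\<lambda>_. 0) (mset_set (UNIV - {i})))"
      by (simp add: hh_def trip_zero)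
    also have "\<dots> = 0" by (rule homog_psi_zero[OF assms(1)]) (simp add: card_Diff_singleton)
    finally show ?thesis .
  qed
  hence "hh psi (0::real^2^'n) = (\<lambda>_. 0)" by (simp add: fun_eq_iff)
  hence "SS psi (0::real^2^'n) = image_mset (\<lambda>_. 0) (mset_set (UNIV::'n set))"
    by (simp add: SS_def)
  hence "phi (SS psi (0::real^2^'n)) = 0"
    using homog_phi_zero[OF assms(2), of "mset_set (UNIV::'n set)"] by simp
  thus ?thesis using True by (simp add: Hmap_def)
next
  case False
  thus ?thesis by (simp add: Hmap_def Let_def SS_def hh_def[abs_def] trip_def[abs_def])
qed

lemma mv_sum: "(R::real^2^2) *v sum f A = (\<Sum>k\<in>A. R *v f k)"
  by (induction A rule: infinite_finite_induct) (auto simp: matrix_vector_right_distrib)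

lemma centralize_transform:
  fixes \<pi> :: "'n::finite \<Rightarrow> 'n"
  assumes "bij \<pi>"
  shows "centralize (\<chi> j. R *v (Y::real^2^'n)$(\<pi> j) - t) = (\<chi> j. R *v (centralize Y)$(\<pi> j))"
proof -
  have s: "(\<Sum>k\<in>UNIV. R *v Y$(\<pi> k) - t) = R *v (\<Sum>k\<in>UNIV. Y$k) - real CARD('n) *\<^sub>R t"
  proof -
    have "(\<Sum>k\<in>UNIV. R *v Y$(\<pi> k)) = (\<Sum>k\<in>UNIV. R *v Y$k)"
      using sum.reindex_bij_betw[of \<pi> UNIV UNIV "\<lambda>k. R *v Y$k"] assms by simp
    moreover have "(\<Sum>k\<in>(UNIV::'n set). t) = real CARD('n) *\<^sub>R t"
      using sum_constant_scaleR[of t "UNIV::'n set"] by simp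
    ultimately show ?thesis by (simp add: sum_subtractf mv_sum)
  qed
  have n0: "real CARD('n) \<noteq> 0" by simp
  show ?thesis
    unfolding centralize_def
    by (simp add: vec_eq_iff s matrix_vector_mult_diff_distrib matrix_vector_mult_scaleR scaleR_diff_right n0)
qed

lemma trip_transform:
  fixes \<pi> :: "'n::finite \<Rightarrow> 'n"
  assumes "R \<in> SO2" "bij \<pi>"
  shows "trip (\<chi> j. R *v (y::real^2^'n)$(\<pi> j)) i j = trip y (\<pi> i) (\<pi> j)"
proof -
  have "(norm (\<chi> j. R *v y$(\<pi> j)))\<^sup>2 = (norm y)\<^sup>2"
  proof -
    have "(\<Sum>j\<in>UNIV. (norm (R *v y$(\<pi> j)))\<^sup>2) = (\<Sum>j\<in>UNIV. (norm (y$(\<pi> j)))\<^sup>2)"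
      using SO2_norm[OF assms(1)] by simp
    also have "\<dots> = (\<Sum>j\<in>UNIV. (norm (y$j))\<^sup>2)"
      using sum.reindex_bij_betw[of \<pi> UNIV UNIV "\<lambda>k. (norm (y$k))\<^sup>2"] assms by simp
    finally show ?thesis by (simp add: normsq_mat)
  qed
  hence n: "norm (\<chi> j. R *v y$(\<pi> j)) = norm y" by (simp add: power2_eq_iff_nonneg)
  show ?thesis
    unfolding trip_def n
    by (simp add: SO2_inner[OF assms(1)] SO2_perp[OF assms(1)] SO2_norm[OF assms(1)])
qed

lemma SS_transform:
  fixes \<pi> :: "'n::finite \<Rightarrow> 'n"
  assumes "R \<in> SO2" "bij \<pi>"
  shows "SS psi (\<chi> j. R *v (y::real^2^'n)$(\<pi> j)) = SS psi y"
proof -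
  have inj: "inj_on \<pi> A" for A using assms(2) bij_is_inj inj_on_subset by blast
  have img: "\<pi> ` (UNIV - {i}) = UNIV - {\<pi> i}" for i using assms(2)
    by (metis bij_def image_set_diff image_empty image_insert inj_on_subset subset_UNIV)
  have h: "hh psi (\<chi> j. R *v y$(\<pi> j)) i = hh psi y (\<pi> i)" for i
  proof -
    have "image_mset (trip (\<chi> j. R *v y$(\<pi> j)) i) (mset_set (UNIV - {i}))
        = image_mset (trip y (\<pi> i) \<circ> \<pi>) (mset_set (UNIV - {i}))"
    proof -
      have "trip (\<chi> j. R *v y$(\<pi> j)) i = trip y (\<pi> i) \<circ> \<pi>"
        by (simp add: fun_eq_iff trip_transform[OF assms])
      thus ?thesis by simp
    qed
    also have "\<dots> = image_mset (trip y (\<pi> i)) (image_mset \<pi> (mset_set (UNIV - {i})))"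
      by (simp add: multiset.map_comp)
    also have "\<dots> = image_mset (trip y (\<pi> i)) (mset_set (UNIV - {\<pi> i}))"
      by (simp add: image_mset_mset_set[OF inj] img)
    finally show ?thesis by (simp add: hh_def SO2_norm[OF assms(1)])
  qed
  have "hh psi (\<chi> j. R *v y$(\<pi> j)) = hh psi y \<circ> \<pi>" by (simp add: fun_eq_iff h)
  hence "SS psi (\<chi> j. R *v y$(\<pi> j)) = image_mset (hh psi y \<circ> \<pi>) (mset_set UNIV)"
    by (simp add: SS_def)
  also have "\<dots> = image_mset (hh psi y) (image_mset \<pi> (mset_set UNIV))"
    by (simp add: multiset.map_comp)
  also have "\<dots> = SS psi y"
    using assms(2) by (simp add: image_mset_mset_set[OF inj] SS_def bij_def)
  finally show ?thesis .
qed

lemma centralize_diff: "centralize (X - Y) = centralize X - centralize (Y::real^2^'n)"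
  by (simp add: centralize_def vec_eq_iff sum_subtractf scaleR_diff_right)

lemma centralize_norm_le: "norm (centralize (Z::real^2^'n)) \<le> norm Z"
proof -
  define m where "m = (1 / real CARD('n)) *\<^sub>R (\<Sum>k\<in>UNIV. Z$k)"
  have sm: "(\<Sum>k\<in>UNIV. Z$k) = real CARD('n) *\<^sub>R m" by (simp add: m_def)
  have "(norm (centralize Z))\<^sup>2 = (\<Sum>j\<in>UNIV. (norm (Z$j - m))\<^sup>2)"
    by (simp add: normsq_mat centralize_def m_def)
  also have "\<dots> = (\<Sum>j\<in>UNIV. (norm (Z$j))\<^sup>2 - 2 * (Z$j \<bullet> m) + (norm m)\<^sup>2)"
    by (simp add: power2_norm_eq_inner inner_diff_left inner_diff_right inner_commute algebra_simps)
  also have "\<dots> = (\<Sum>j\<in>UNIV. (norm (Z$j))\<^sup>2) - 2 * ((\<Sum>j\<in>UNIV. Z$j) \<bullet> m) + real CARD('n) * (norm m)\<^sup>2"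
    by (simp add: sum.distrib sum_subtractf sum_distrib_left inner_sum_left)
  also have "\<dots> = (\<Sum>j\<in>UNIV. (norm (Z$j))\<^sup>2) - real CARD('n) * (norm m)\<^sup>2"
    by (simp add: sm power2_norm_eq_inner)
  also have "\<dots> \<le> (norm Z)\<^sup>2" by (simp add: normsq_mat)
  finally show ?thesis by (simp add: power2_le_iff_abs_le)
qed



lemma infnorm_real: "infnorm (a::real) = \<bar>a\<bar>"
  by (simp add: infnorm_def)

lemma infnorm_vec3_le: "infnorm (v::real^3) \<le> \<bar>v$1\<bar> + \<bar>v$2\<bar> + \<bar>v$3\<bar>"
  using infnorm_le_norm[of v] norm_le_l1_cart[of v] by (simp add: sum_3)

lemma trip_lip: "infnorm (trip x i j - trip y i j) \<le> 7 * norm (x - (y::real^2^'n))"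
proof -
  define d where "d = norm (x - y)"
  have di: "norm (x$k - y$k) \<le> d" for k
    using Finite_Cartesian_Product.norm_nth_le[of "x - y" k] by (simp add: d_def)
  have dn: "\<bar>norm x - norm y\<bar> \<le> d" unfolding d_def by (rule norm_triangle_ineq3)
  have c1: "\<bar>(x$i \<bullet> x$j)/norm x - (y$i \<bullet> y$j)/norm y\<bar> \<le> 3*d"
    by (rule lip3[OF Finite_Cartesian_Product.norm_nth_le Finite_Cartesian_Product.norm_nth_le Finite_Cartesian_Product.norm_nth_le Finite_Cartesian_Product.norm_nth_le di di dn norm_ge_zero norm_ge_zero])
  have c2: "\<bar>(perp2 (x$i) \<bullet> x$j)/norm x - (perp2 (y$i) \<bullet> y$j)/norm y\<bar> \<le> 3*d"
  proof (rule lip3[OF _ Finite_Cartesian_Product.norm_nth_le _ Finite_Cartesian_Product.norm_nth_le _ di dn norm_ge_zero norm_ge_zero])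
    show "norm (perp2 (x$i)) \<le> norm x" "norm (perp2 (y$i)) \<le> norm y" by (simp_all add: Finite_Cartesian_Product.norm_nth_le)
    show "norm (perp2 (x$i) - perp2 (y$i)) \<le> d" using di[of i] by (simp add: perp2_diff[symmetric])
  qed
  have c3: "\<bar>norm (x$j) - norm (y$j)\<bar> \<le> d"
    using norm_triangle_ineq3[of "x$j" "y$j"] di[of j] by linarith
  have e1: "(trip x i j - trip y i j)$1 = (x$i \<bullet> x$j)/norm x - (y$i \<bullet> y$j)/norm y"
    and e2: "(trip x i j - trip y i j)$2 = (perp2 (x$i) \<bullet> x$j)/norm x - (perp2 (y$i) \<bullet> y$j)/norm y"
    and e3: "(trip x i j - trip y i j)$3 = norm (x$j) - norm (y$j)"
    by (simp_all only: trip_def vector_minus_component vector_3)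
  have "infnorm (trip x i j - trip y i j) \<le> 3*d + 3*d + d"
    using infnorm_vec3_le[of "trip x i j - trip y i j"] c1 c2 c3 unfolding e1 e2 e3 by linarith
  thus ?thesis by (simp add: d_def)
qed

lemma hh_lip:
  fixes psi :: "real \<Rightarrow> (real^3) multiset \<Rightarrow> 'd::euclidean_space"
  assumes C: "\<And>v v' S S'. size S = CARD('n::finite) - 1 \<Longrightarrow> size S' = CARD('n) - 1 \<Longrightarrow>
      infnorm (psi v S - psi v' S') \<le> C * max (infnorm (v - v')) (Winf S S')" and C0: "C \<ge> 0"
  shows "infnorm (hh psi x i - hh psi y i) \<le> C * (7 * norm (x - (y::real^2^'n)))"
proof -
  define d where "d = norm (x - y)"
  have d0: "d \<ge> 0" by (simp add: d_def)
  obtain L where L0: "distinct L" "set L = UNIV - {i}"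
    using finite_distinct_list[of "UNIV - {i}"] by auto
  note L = L0 mset_map_distinct[OF L0]
  have W: "Winf (image_mset (trip x i) (mset_set (UNIV - {i}))) (image_mset (trip y i) (mset_set (UNIV - {i}))) \<le> 7 * d"
  proof (rule Winf_le[OF L(3)[of "trip x i"] L(3)[of "trip y i"]])
    show "0 \<le> 7 * d" using d0 by simp
    fix k assume "k < length (map (trip x i) L)"
    thus "infnorm (map (trip x i) L ! k - map (trip y i) L ! k) \<le> 7 * d"
      using trip_lip[of x i "L!k" y] by (simp add: d_def)
  qed
  have n: "infnorm (norm (x$i) - norm (y$i)) \<le> 7 * d"
  proof -
    have "\<bar>norm (x$i) - norm (y$i)\<bar> \<le> norm (x$i - y$i)" by (rule norm_triangle_ineq3)
    also have "\<dots> \<le> d" using Finite_Cartesian_Product.norm_nth_le[of "x - y" i] by (simp add: d_def)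
    finally show ?thesis using d0 by (simp add: infnorm_real)
  qed
  have sz: "size (image_mset (trip z i) (mset_set (UNIV - {i}))) = CARD('n) - 1" for z :: "real^2^'n"
    by (simp add: card_Diff_singleton)
  have "infnorm (hh psi x i - hh psi y i) \<le> C * max (infnorm (norm (x$i) - norm (y$i)))
       (Winf (image_mset (trip x i) (mset_set (UNIV - {i}))) (image_mset (trip y i) (mset_set (UNIV - {i}))))"
    unfolding hh_def by (rule C[OF sz sz])
  also have "\<dots> \<le> C * (7 * d)"
  proof (rule mult_left_mono[OF _ C0])
    show "max (infnorm (norm (x$i) - norm (y$i)))
       (Winf (image_mset (trip x i) (mset_set (UNIV - {i}))) (image_mset (trip y i) (mset_set (UNIV - {i})))) \<le> 7 * d"
      using W n by (rule max.boundedI[rotated])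
  qed
  finally show ?thesis by (simp add: d_def)
qed

lemma SS_lip:
  fixes psi :: "real \<Rightarrow> (real^3) multiset \<Rightarrow> 'd::euclidean_space" and phi :: "'d multiset \<Rightarrow> 'e::euclidean_space"
  assumes C: "\<And>v v' S S'. size S = CARD('n::finite) - 1 \<Longrightarrow> size S' = CARD('n) - 1 \<Longrightarrow>
      infnorm (psi v S - psi v' S') \<le> C * max (infnorm (v - v')) (Winf S S')" and C0: "C \<ge> 0"
    and D: "\<And>S S'. size S = CARD('n) \<Longrightarrow> size S' = CARD('n) \<Longrightarrow>
      infnorm (phi S - phi S') \<le> D * Winf S S'" and D0: "D \<ge> 0"
  shows "infnorm (phi (SS psi x) - phi (SS psi y)) \<le> D * (C * (7 * norm (x - (y::real^2^'n))))"
proof -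
  obtain L where L0: "distinct L" "set L = (UNIV::'n set)"
    using finite_distinct_list[of "UNIV::'n set"] by auto
  note L = L0 mset_map_distinct[OF L0]
  have W: "Winf (SS psi x) (SS psi y) \<le> C * (7 * norm (x - y))"
    unfolding SS_def
  proof (rule Winf_le[OF L(3)[of "hh psi x"] L(3)[of "hh psi y"]])
    show "0 \<le> C * (7 * norm (x - y))" using C0 by simp
    fix k assume "k < length (map (hh psi x) L)"
    thus "infnorm (map (hh psi x) L ! k - map (hh psi y) L ! k) \<le> C * (7 * norm (x - y))"
      using hh_lip[OF C C0, of x "L!k" y] by simp
  qed
  have "infnorm (phi (SS psi x) - phi (SS psi y)) \<le> D * Winf (SS psi x) (SS psi y)"
    by (rule D) (simp_all add: SS_def)
  also have "\<dots> \<le> D * (C * (7 * norm (x - y)))" by (rule mult_left_mono[OF W D0])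
  finally show ?thesis .
qed



lemma L2_bound:
  assumes "\<And>j. \<bar>g j\<bar> \<le> (e::real)"
  shows "L2_set g (UNIV::'n::finite set) \<le> sqrt (real CARD('n)) * e"
proof -
  have e0: "e \<ge> 0" using assms[of undefined] by linarith
  have "(\<Sum>j\<in>(UNIV::'n set). (g j)\<^sup>2) \<le> (\<Sum>j\<in>(UNIV::'n set). e\<^sup>2)"
  proof (intro sum_mono)
    fix j show "(g j)\<^sup>2 \<le> e\<^sup>2" using power_mono[OF assms[of j] abs_ge_zero, of 2] by simp
  qed
  hence "L2_set g (UNIV::'n set) \<le> sqrt (real CARD('n) * e\<^sup>2)" unfolding L2_set_def by simp
  thus ?thesis using e0 by (simp add: real_sqrt_mult)
qed

lemma sq_bound: "\<bar>a\<bar> \<le> c \<Longrightarrow> \<bar>b\<bar> \<le> c \<Longrightarrow> a\<^sup>2 + b\<^sup>2 \<le> 2 * c\<^sup>2" for a b c :: real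
proof -
  assume h: "\<bar>a\<bar> \<le> c" "\<bar>b\<bar> \<le> c"
  have "a\<^sup>2 \<le> c\<^sup>2" using power_mono[OF h(1) abs_ge_zero, of 2] by simp
  moreover have "b\<^sup>2 \<le> c\<^sup>2" using power_mono[OF h(2) abs_ge_zero, of 2] by simp
  ultimately show ?thesis by simp
qed

lemma lower_core:
  fixes x y :: "real^2^'n::finite" and \<pi> :: "'n \<Rightarrow> 'n" and \<delta> :: real
  assumes bij: "bij \<pi>" and d0: "\<delta> \<ge> 0"
    and imax: "\<And>j. norm (x$j) \<le> norm (x$i)"
    and nrm: "\<And>j. \<bar>norm (x$j) - norm (y$(\<pi> j))\<bar> \<le> \<delta>"
    and c1: "\<And>j. j \<noteq> i \<Longrightarrow> \<bar>(x$i \<bullet> x$j)/norm x - (y$(\<pi> i) \<bullet> y$(\<pi> j))/norm y\<bar> \<le> \<delta>"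
    and c2: "\<And>j. j \<noteq> i \<Longrightarrow> \<bar>(perp2 (x$i) \<bullet> x$j)/norm x - (perp2 (y$(\<pi> i)) \<bullet> y$(\<pi> j))/norm y\<bar> \<le> \<delta>"
  shows "\<exists>R\<in>SO2. sqrt (\<Sum>j\<in>UNIV. (norm (x$j - R *v y$(\<pi> j)))\<^sup>2) \<le> 6 * real CARD('n) * \<delta>"
proof -
  define n where "n = real CARD('n)"
  define s where "s = sqrt n"
  have n1: "n \<ge> 1" unfolding n_def by (simp add: Suc_le_eq)
  have s0: "s \<ge> 0" unfolding s_def using n1 by simp
  have ss: "s\<^sup>2 = n" unfolding s_def using n1 by (simp add: real_sqrt_pow2)
  define N where "N = norm x"
  define M where "M = norm y"
  have LN: "N = L2_set (\<lambda>j. norm (x$j)) UNIV" by (simp add: N_def norm_vec_def)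
  have LM: "M = L2_set (\<lambda>j. norm (y$(\<pi> j))) UNIV"
  proof -
    have "(\<Sum>j\<in>UNIV. (norm (y$(\<pi> j)))\<^sup>2) = (\<Sum>j\<in>UNIV. (norm (y$j))\<^sup>2)"
      using sum.reindex_bij_betw[of \<pi> UNIV UNIV "\<lambda>k. (norm (y$k))\<^sup>2"] bij by simp
    thus ?thesis by (simp add: M_def norm_vec_def L2_set_def)
  qed
  have NM1: "N \<le> M + s * \<delta>"
  proof -
    have "N = L2_set (\<lambda>j. norm (y$(\<pi> j)) + (norm (x$j) - norm (y$(\<pi> j)))) UNIV" by (simp add: LN)
    also have "\<dots> \<le> M + L2_set (\<lambda>j. norm (x$j) - norm (y$(\<pi> j))) UNIV"
      unfolding LM by (rule L2_set_triangle_ineq)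
    also have "\<dots> \<le> M + s * \<delta>" using L2_bound[OF nrm] by (simp add: s_def n_def)
    finally show ?thesis .
  qed
  have NM2: "M \<le> N + s * \<delta>"
  proof -
    have "M = L2_set (\<lambda>j. norm (x$j) + (norm (y$(\<pi> j)) - norm (x$j))) UNIV" by (simp add: LM)
    also have "\<dots> \<le> N + L2_set (\<lambda>j. norm (y$(\<pi> j)) - norm (x$j)) UNIV"
      unfolding LN by (rule L2_set_triangle_ineq)
    also have "\<dots> \<le> N + s * \<delta>" using L2_bound[of "\<lambda>j. norm (y$(\<pi> j)) - norm (x$j)" \<delta>] nrm
      by (simp add: s_def n_def abs_minus_commute)
    finally show ?thesis .
  qed
  have NM: "\<bar>N - M\<bar> \<le> s * \<delta>" using NM1 NM2 by linarith
  have Nx: "N \<le> s * norm (x$i)"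
  proof -
    have "N\<^sup>2 = (\<Sum>j\<in>UNIV. (norm (x$j))\<^sup>2)" by (simp add: N_def normsq_mat)
    also have "\<dots> \<le> (\<Sum>j\<in>(UNIV::'n set). (norm (x$i))\<^sup>2)"
      by (intro sum_mono power_mono imax) simp
    also have "\<dots> = (s * norm (x$i))\<^sup>2" by (simp add: power_mult_distrib ss n_def)
    finally show ?thesis using s0 by (simp add: power2_le_iff_abs_le)
  qed
  have suff: "\<exists>R\<in>SO2. sqrt (\<Sum>j\<in>UNIV. (norm (x$j - R *v y$(\<pi> j)))\<^sup>2) \<le> 6 * n * \<delta>"
    if R: "R \<in> SO2" "\<And>j. (norm (x$j - R *v y$(\<pi> j)))\<^sup>2 \<le> 36 * n * \<delta>\<^sup>2" for R
  proof -
    have "(\<Sum>j\<in>UNIV. (norm (x$j - R *v y$(\<pi> j)))\<^sup>2) \<le> (\<Sum>j\<in>(UNIV::'n set). 36 * n * \<delta>\<^sup>2)"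
      by (intro sum_mono R(2))
    also have "\<dots> = (6 * n * \<delta>)\<^sup>2" by (simp add: n_def power2_eq_square)
    finally have "sqrt (\<Sum>j\<in>UNIV. (norm (x$j - R *v y$(\<pi> j)))\<^sup>2) \<le> sqrt ((6 * n * \<delta>)\<^sup>2)"
      by (rule real_sqrt_le_mono)
    also have "\<dots> = 6 * n * \<delta>" using n1 d0 by simp
    finally show ?thesis using R(1) by blast
  qed
  have d2: "\<delta>\<^sup>2 \<le> 36 * n * \<delta>\<^sup>2" using n1 by (simp add: mult_le_cancel_right1 zero_le_power2)
  have "\<exists>R\<in>SO2. sqrt (\<Sum>j\<in>UNIV. (norm (x$j - R *v y$(\<pi> j)))\<^sup>2) \<le> 6 * n * \<delta>"
  proof (cases "x$i = 0 \<or> y$(\<pi> i) = 0")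
    case True
    have "norm (x$j - y$(\<pi> j)) \<le> 3 * \<delta>" for j
    proof -
      have t: "norm (x$j - y$(\<pi> j)) \<le> norm (x$j) + norm (y$(\<pi> j))" by (rule norm_triangle_ineq4)
      have a: "norm (x$j) \<le> norm (x$i)" by (rule imax)
      have b: "\<bar>norm (x$j) - norm (y$(\<pi> j))\<bar> \<le> \<delta>" "\<bar>norm (x$i) - norm (y$(\<pi> i))\<bar> \<le> \<delta>" by (rule nrm)+
      show ?thesis using True
      proof
        assume "x$i = 0" thus ?thesis using t a b d0 by simp
      next
        assume "y$(\<pi> i) = 0" thus ?thesis using t a b d0 by simp
      qed
    qed
    hence "(norm (x$j - mat 1 *v y$(\<pi> j)))\<^sup>2 \<le> 36 * n * \<delta>\<^sup>2" for j
    proof -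
      have "(norm (x$j - y$(\<pi> j)))\<^sup>2 \<le> (3 * \<delta>)\<^sup>2"
        using power_mono[OF \<open>norm (x$j - y$(\<pi> j)) \<le> 3 * \<delta>\<close> norm_ge_zero, of 2] .
      also have "\<dots> = 9 * \<delta>\<^sup>2" by (simp add: power_mult_distrib)
      also have "\<dots> \<le> (36 * n) * \<delta>\<^sup>2"
        by (rule mult_right_mono) (use n1 in auto)
      finally show ?thesis by (simp add: matrix_vector_mul_lid)
    qed
    thus ?thesis using suff[OF id_SO2] by blast
  next
    case False
    define nx where "nx = norm (x$i)"
    define ny where "ny = norm (y$(\<pi> i))"
    have nx0: "nx > 0" "ny > 0" using False by (auto simp: nx_def ny_def)
    have "x \<noteq> 0" "y \<noteq> 0" using False by auto
    hence N0: "N > 0" and M0: "M > 0" by (simp_all add: N_def M_def)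
    have hnx: "\<bar>nx - ny\<bar> \<le> \<delta>" using nrm[of i] by (simp add: nx_def ny_def)
    obtain R where R: "R \<in> SO2" "\<forall>w. (R *v w) \<bullet> x$i = (norm (x$i) / norm (y$(\<pi> i))) * (w \<bullet> y$(\<pi> i)) \<and>
       (R *v w) \<bullet> perp2 (x$i) = (norm (x$i) / norm (y$(\<pi> i))) * (w \<bullet> perp2 (y$(\<pi> i)))"
      using rot_exists[of "x$i" "y$(\<pi> i)"] False by auto
    have "(norm (x$j - R *v y$(\<pi> j)))\<^sup>2 \<le> 36 * n * \<delta>\<^sup>2" for j
    proof -
      have z: "(norm (x$j - R *v y$(\<pi> j)))\<^sup>2 =
          ((x$j \<bullet> x$i)/nx - (y$(\<pi> j) \<bullet> y$(\<pi> i))/ny)\<^sup>2 + ((x$j \<bullet> perp2 (x$i))/nx - (y$(\<pi> j) \<bullet> perp2 (y$(\<pi> i)))/ny)\<^sup>2"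
        unfolding nx_def ny_def by (rule z_identity) (use False R(2) in auto)
      show ?thesis
      proof (cases "j = i")
        case True
        have pp: "(v::real^2) \<bullet> perp2 v = 0" for v by (simp add: inner2 algebra_simps)
        have "(x$i \<bullet> x$i)/nx = nx" "(y$(\<pi> i) \<bullet> y$(\<pi> i))/ny = ny"
          using nx0 by (simp_all add: nx_def ny_def dot_square_norm power2_eq_square)
        hence "(norm (x$j - R *v y$(\<pi> j)))\<^sup>2 = (nx - ny)\<^sup>2" using z True pp by simp
        also have "\<dots> \<le> \<delta>\<^sup>2" using power_mono[OF hnx abs_ge_zero, of 2] by simp
        also have "\<dots> \<le> 36 * n * \<delta>\<^sup>2" by (rule d2)
        finally show ?thesis .
      next
        case False
        have yb: "norm (y$(\<pi> j)) \<le> M" using Finite_Cartesian_Product.norm_nth_le by (simp add: M_def)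
        have B1: "\<bar>y$(\<pi> i) \<bullet> y$(\<pi> j)\<bar> \<le> ny * M"
          using Cauchy_Schwarz_ineq2[of "y$(\<pi> i)" "y$(\<pi> j)"] yb nx0
          by (smt (verit) mult_left_mono ny_def)
        have B2: "\<bar>perp2 (y$(\<pi> i)) \<bullet> y$(\<pi> j)\<bar> \<le> ny * M"
          using Cauchy_Schwarz_ineq2[of "perp2 (y$(\<pi> i))" "y$(\<pi> j)"] yb nx0
          by (smt (verit) mult_left_mono ny_def norm_perp2)
        have Nx': "N \<le> s * nx" using Nx by (simp add: nx_def)
        have a: "\<bar>(x$i \<bullet> x$j)/nx - (y$(\<pi> i) \<bullet> y$(\<pi> j))/ny\<bar> \<le> 3 * s * \<delta>"
          by (rule coord_bound[OF N0 M0 nx0 _ Nx' B1 hnx NM s0]) (use c1[OF False] in \<open>simp add: N_def M_def\<close>)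
        have b: "\<bar>(perp2 (x$i) \<bullet> x$j)/nx - (perp2 (y$(\<pi> i)) \<bullet> y$(\<pi> j))/ny\<bar> \<le> 3 * s * \<delta>"
          by (rule coord_bound[OF N0 M0 nx0 _ Nx' B2 hnx NM s0]) (use c2[OF False] in \<open>simp add: N_def M_def\<close>)
        have "(norm (x$j - R *v y$(\<pi> j)))\<^sup>2 \<le> 2 * (3 * s * \<delta>)\<^sup>2"
          unfolding z using sq_bound[OF a b] by (simp add: inner_commute)
        also have "\<dots> = 18 * n * \<delta>\<^sup>2" by (simp add: power_mult_distrib ss)
        also have "\<dots> \<le> 36 * n * \<delta>\<^sup>2" using n1 by (simp add: zero_le_power2)
        finally show ?thesis .
      qed
    qed
    thus ?thesis using suff[OF R(1)] by blast
  qed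
  thus ?thesis by (simp add: n_def)
qed



lemma dG_facts:
  fixes X Y :: "real^2^'n::finite"
  shows "dGplus X Y \<ge> 0"
    and "\<And>\<pi> R t. \<pi> permutes UNIV \<Longrightarrow> R \<in> SO2 \<Longrightarrow> dGplus X Y \<le> sqrt (\<Sum>j\<in>UNIV. (norm (X$j - R *v Y$(\<pi> j) + t))\<^sup>2)"
    and "(\<And>\<pi> R t. \<pi> permutes UNIV \<Longrightarrow> R \<in> SO2 \<Longrightarrow> c \<le> sqrt (\<Sum>j\<in>UNIV. (norm (X$j - R *v Y$(\<pi> j) + t))\<^sup>2)) \<Longrightarrow> c \<le> dGplus X Y"
proof -
  define P :: "(('n \<Rightarrow> 'n) \<times> (real^2^2) \<times> (real^2)) set" where "P = {(\<pi>, R, t). \<pi> permutes (UNIV :: 'n set) \<and> R \<in> SO2}"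
  define F where "F = (\<lambda>p. case p of (\<pi>, R, t) \<Rightarrow> sqrt (\<Sum>j\<in>UNIV. (norm (X$j - R *v Y$(\<pi> j) + t))\<^sup>2))"
  have dG: "dGplus X Y = (INF p\<in>P. F p)" by (simp add: dGplus_def P_def F_def)
  have ne: "P \<noteq> {}" unfolding P_def using id_SO2 permutes_id by blast
  have bdd: "bdd_below (F ` P)" by (rule bdd_belowI[of _ 0]) (auto simp: F_def sum_nonneg)
  have F0: "\<forall>p\<in>P. 0 \<le> F p" by (auto simp: F_def sum_nonneg)
  show "dGplus X Y \<ge> 0" unfolding dG using ne F0 by (simp add: cINF_greatest)
  show "dGplus X Y \<le> sqrt (\<Sum>j\<in>UNIV. (norm (X$j - R *v Y$(\<pi> j) + t))\<^sup>2)" if "\<pi> permutes UNIV" "R \<in> SO2" for \<pi> R t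
  proof -
    have "(\<pi>, R, t) \<in> P" using that by (simp add: P_def)
    from cINF_lower[OF bdd this] show ?thesis by (simp add: dG F_def)
  qed
  show "c \<le> dGplus X Y" if h: "\<And>\<pi> R t. \<pi> permutes UNIV \<Longrightarrow> R \<in> SO2 \<Longrightarrow> c \<le> sqrt (\<Sum>j\<in>UNIV. (norm (X$j - R *v Y$(\<pi> j) + t))\<^sup>2)"
    unfolding dG using ne by (rule cINF_greatest) (auto simp: P_def F_def h)
qed

lemma norm_as_sum: "norm (Z::real^2^'n::finite) = sqrt (\<Sum>j\<in>UNIV. (norm (Z$j))\<^sup>2)"
  by (simp add: norm_vec_def L2_set_def)

theorem theorem4:
  fixes psi :: "real \<Rightarrow> (real^3) multiset \<Rightarrow> 'd::euclidean_space"
    and phi :: "'d multiset \<Rightarrow> real^'m"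
  assumes "CARD('n::finite) \<ge> 2"
    and "homog_psi (CARD('n) - 1) psi" and "bilip_psi (CARD('n) - 1) psi"
    and "homog_phi (CARD('n)) phi" and "bilip_phi (CARD('n)) phi"
  shows "\<exists>a b. 0 < a \<and> a \<le> b \<and>
    (\<forall>X Y :: real^2^'n.
       a * dGplus X Y \<le> infnorm (Hmap psi phi X - Hmap psi phi Y) \<and>
       infnorm (Hmap psi phi X - Hmap psi phi Y) \<le> b * dGplus X Y)"
proof -
  obtain cpsi Cpsi where cpsi: "0 < cpsi" "cpsi \<le> Cpsi"
    and psiL: "\<And>v v' S S'. size S = CARD('n) - 1 \<Longrightarrow> size S' = CARD('n) - 1 \<Longrightarrow>
      cpsi * max (infnorm (v - v')) (Winf S S') \<le> infnorm (psi v S - psi v' S')"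
    and psiU: "\<And>v v' S S'. size S = CARD('n) - 1 \<Longrightarrow> size S' = CARD('n) - 1 \<Longrightarrow>
      infnorm (psi v S - psi v' S') \<le> Cpsi * max (infnorm (v - v')) (Winf S S')"
    using assms(3) unfolding bilip_psi_def by blast
  obtain cphi Cphi where cphi: "0 < cphi" "cphi \<le> Cphi"
    and phiL: "\<And>S S'. size S = CARD('n) \<Longrightarrow> size S' = CARD('n) \<Longrightarrow>
      cphi * Winf S S' \<le> infnorm (phi S - phi S')"
    and phiU: "\<And>S S'. size S = CARD('n) \<Longrightarrow> size S' = CARD('n) \<Longrightarrow>
      infnorm (phi S - phi S') \<le> Cphi * Winf S S'"
    using assms(5) unfolding bilip_phi_def by blast
  define n where "n = real CARD('n)"
  have n1: "n \<ge> 1" unfolding n_def by (simp add: Suc_le_eq)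
  define b where "b = Cphi * (Cpsi * 7)"
  define a0 where "a0 = cphi * cpsi / (6 * n)"
  define a where "a = min a0 b"
  have b0: "b > 0" using cpsi cphi by (simp add: b_def)
  have a00: "a0 > 0" using cpsi cphi n1 by (simp add: a0_def)
  have Hm: "Hmap psi phi Z = phi (SS psi (centralize Z))" for Z :: "real^2^'n"
    by (rule Hmap_eq[OF assms(2) assms(4)])
  have sizeSS: "size (SS psi z) = CARD('n)" for z :: "real^2^'n" by (simp add: SS_def)
  have upper: "infnorm (Hmap psi phi X - Hmap psi phi Y) \<le> b * dGplus X Y" for X Y :: "real^2^'n"
  proof -
    define D where "D = infnorm (Hmap psi phi X - Hmap psi phi Y)"
    have "D / b \<le> dGplus X Y"
    proof (rule dG_facts(3))
      fix \<pi> R t assume p: "\<pi> permutes (UNIV::'n set)" "R \<in> SO2"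
      have bij: "bij \<pi>" using p(1) by (rule permutes_bij)
      define Y' where "Y' = (\<chi> j. R *v Y$(\<pi> j) - t)"
      have cY: "centralize Y' = (\<chi> j. R *v (centralize Y)$(\<pi> j))"
        unfolding Y'_def by (rule centralize_transform[OF bij])
      have "Hmap psi phi Y = Hmap psi phi Y'"
        by (simp add: Hm cY SS_transform[OF p(2) bij])
      hence "D = infnorm (phi (SS psi (centralize X)) - phi (SS psi (centralize Y')))"
        by (simp add: D_def Hm)
      also have "\<dots> \<le> Cphi * (Cpsi * (7 * norm (centralize X - centralize Y')))"
        by (rule SS_lip[OF psiU _ phiU]) (use cpsi cphi in auto)
      also have "\<dots> = b * norm (centralize (X - Y'))" by (simp add: b_def centralize_diff)
      also have "\<dots> \<le> b * norm (X - Y')" using b0 centralize_norm_le by (simp add: mult_left_mono)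
      also have "norm (X - Y') = sqrt (\<Sum>j\<in>UNIV. (norm (X$j - R *v Y$(\<pi> j) + t))\<^sup>2)"
        by (simp add: norm_as_sum Y'_def algebra_simps)
      finally show "D / b \<le> sqrt (\<Sum>j\<in>UNIV. (norm (X$j - R *v Y$(\<pi> j) + t))\<^sup>2)"
        using b0 by (simp add: divide_le_eq mult.commute)
    qed
    thus ?thesis using b0 by (simp add: D_def divide_le_eq mult.commute)
  qed
  have lower: "a0 * dGplus X Y \<le> infnorm (Hmap psi phi X - Hmap psi phi Y)" for X Y :: "real^2^'n"
  proof -
    define x where "x = centralize X"
    define y where "y = centralize Y"
    define D where "D = infnorm (Hmap psi phi X - Hmap psi phi Y)"
    have D: "D = infnorm (phi (SS psi x) - phi (SS psi y))" by (simp add: D_def Hm x_def y_def)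
    define \<delta> where "\<delta> = D / (cphi * cpsi)"
    have D0: "D \<ge> 0" by (simp add: D_def infnorm_pos_le)
    have d0: "\<delta> \<ge> 0" using D0 cphi cpsi by (simp add: \<delta>_def)
    define W where "W = Winf (SS psi x) (SS psi y)"
    have WD: "cphi * W \<le> D" unfolding D W_def by (rule phiL[OF sizeSS sizeSS])
    obtain xs ys where xs: "mset xs = SS psi x" "mset ys = SS psi y"
      "\<forall>k<length xs. infnorm (xs!k - ys!k) \<le> W"
      using Winf_attained[of "SS psi x" "SS psi y"] unfolding W_def by blast
    have lxs: "length xs = length ys" using xs(1,2) sizeSS by (metis size_mset)
    obtain \<sigma> where \<sigma>: "bij_betw \<sigma> UNIV UNIV" "\<forall>i\<in>UNIV. infnorm (hh psi x i - hh psi y (\<sigma> i)) \<le> W"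
      using match_bij[of "UNIV::'n set" "UNIV::'n set" xs "hh psi x" ys "hh psi y" "\<lambda>u v. infnorm (u - v) \<le> W"]
        xs lxs by (auto simp: SS_def)
    have "Max ((\<lambda>j. norm (x$j)) ` UNIV) \<in> (\<lambda>j. norm (x$j)) ` UNIV" by (rule Max_in) auto
    then obtain i where i: "Max ((\<lambda>j. norm (x$j)) ` UNIV) = norm (x$i)" by blast
    have imax: "norm (x$j) \<le> norm (x$i)" for j unfolding i[symmetric] by (rule Max_ge) auto
    define k where "k = \<sigma> i"
    define Tx where "Tx = image_mset (trip x i) (mset_set (UNIV - {i}))"
    define Ty where "Ty = image_mset (trip y k) (mset_set (UNIV - {k}))"
    have szT: "size Tx = CARD('n) - 1" "size Ty = CARD('n) - 1"
      by (simp_all add: Tx_def Ty_def card_Diff_singleton)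
    have "cpsi * max (infnorm (norm (x$i) - norm (y$k))) (Winf Tx Ty) \<le> infnorm (hh psi x i - hh psi y k)"
      unfolding hh_def Tx_def Ty_def by (rule psiL) (simp_all add: card_Diff_singleton)
    also have "\<dots> \<le> W" using \<sigma>(2) by (simp add: k_def)
    also have "\<dots> \<le> D / cphi" using WD cphi by (simp add: le_divide_eq mult.commute)
    finally have mx: "max (infnorm (norm (x$i) - norm (y$k))) (Winf Tx Ty) \<le> \<delta>"
      using cpsi cphi by (simp add: \<delta>_def le_divide_eq field_simps)
    hence ni: "\<bar>norm (x$i) - norm (y$k)\<bar> \<le> \<delta>" and WT: "Winf Tx Ty \<le> \<delta>"
      by (simp_all add: infnorm_real)
    obtain us vs where uv: "mset us = Tx" "mset vs = Ty" "\<forall>k<length us. infnorm (us!k - vs!k) \<le> Winf Tx Ty"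
      using Winf_attained[of Tx Ty] by blast
    have luv: "length us = length vs" using uv(1,2) szT by (metis size_mset)
    obtain \<tau> where \<tau>: "bij_betw \<tau> (UNIV - {i}) (UNIV - {k})"
      "\<forall>j\<in>UNIV - {i}. infnorm (trip x i j - trip y k (\<tau> j)) \<le> Winf Tx Ty"
      using match_bij[of "UNIV - {i}" "UNIV - {k}" us "trip x i" vs "trip y k" "\<lambda>u v. infnorm (u - v) \<le> Winf Tx Ty"]
        uv luv by (auto simp: Tx_def Ty_def)
    define \<pi> where "\<pi> = \<tau>(i := k)"
    have bpi: "bij_betw \<pi> UNIV UNIV" unfolding \<pi>_def by (rule bij_extend[OF \<tau>(1)]) auto
    hence bij: "bij \<pi>" by simp
    have pii: "\<pi> i = k" by (simp add: \<pi>_def)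
    have tj: "infnorm (trip x i j - trip y k (\<pi> j)) \<le> \<delta>" if "j \<noteq> i" for j
    proof -
      have "infnorm (trip x i j - trip y k (\<tau> j)) \<le> Winf Tx Ty" using \<tau>(2) that by simp
      from order_trans[OF this WT] show ?thesis using that by (simp add: \<pi>_def)
    qed
    have comp: "\<bar>(trip x i j - trip y k (\<pi> j))$c\<bar> \<le> \<delta>" if "j \<noteq> i" for j c
      using component_le_infnorm_cart[of "trip x i j - trip y k (\<pi> j)" c] tj[OF that] by linarith
    have nrm: "\<bar>norm (x$j) - norm (y$(\<pi> j))\<bar> \<le> \<delta>" for j
    proof (cases "j = i")
      case True thus ?thesis using ni pii by simp
    next
      case False thus ?thesis using comp[OF False, of 3] by (simp add: trip_def)
    qed
    have c1: "\<bar>(x$i \<bullet> x$j)/norm x - (y$(\<pi> i) \<bullet> y$(\<pi> j))/norm y\<bar> \<le> \<delta>" if "j \<noteq> i" for j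
      using comp[OF that, of 1] pii by (simp add: trip_def)
    have c2: "\<bar>(perp2 (x$i) \<bullet> x$j)/norm x - (perp2 (y$(\<pi> i)) \<bullet> y$(\<pi> j))/norm y\<bar> \<le> \<delta>" if "j \<noteq> i" for j
      using comp[OF that, of 2] pii by (simp add: trip_def)
    obtain R where R: "R \<in> SO2" "sqrt (\<Sum>j\<in>UNIV. (norm (x$j - R *v y$(\<pi> j)))\<^sup>2) \<le> 6 * n * \<delta>"
      using lower_core[OF bij d0 imax nrm c1 c2] unfolding n_def by blast
    define mX where "mX = (1 / real CARD('n)) *\<^sub>R (\<Sum>k\<in>UNIV. X$k)"
    define mY where "mY = (1 / real CARD('n)) *\<^sub>R (\<Sum>k\<in>UNIV. Y$k)"
    have "X$j - R *v Y$(\<pi> j) + (R *v mY - mX) = x$j - R *v y$(\<pi> j)" for j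
      by (simp add: x_def y_def centralize_def mX_def mY_def matrix_vector_mult_diff_distrib algebra_simps)
    hence "dGplus X Y \<le> sqrt (\<Sum>j\<in>UNIV. (norm (x$j - R *v y$(\<pi> j)))\<^sup>2)"
      using dG_facts(2)[OF bij_imp_permutes[OF bpi] R(1), of X Y "R *v mY - mX"] by simp
    also have "\<dots> \<le> 6 * n * \<delta>" by (rule R(2))
    finally have "dGplus X Y \<le> 6 * n * \<delta>" .
    hence "a0 * dGplus X Y \<le> a0 * (6 * n * \<delta>)" using a00 by (simp add: mult_left_mono)
    also have "\<dots> = D" using cpsi cphi n1 by (simp add: a0_def \<delta>_def field_simps)
    finally show ?thesis by (simp add: D_def)
  qed
  show ?thesis
  proof (intro exI conjI allI)
    show "0 < a" using a00 b0 by (simp add: a_def)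
    show "a \<le> b" by (simp add: a_def)
    fix X Y :: "real^2^'n"
    have "a * dGplus X Y \<le> a0 * dGplus X Y"
      using dG_facts(1)[of X Y] by (intro mult_right_mono) (auto simp: a_def)
    thus "a * dGplus X Y \<le> infnorm (Hmap psi phi X - Hmap psi phi Y)" using lower[of X Y] by linarith
    show "infnorm (Hmap psi phi X - Hmap psi phi Y) \<le> b * dGplus X Y" by (rule upper)
  qed
qed


end
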